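(* Let $\mathbb H(t)=4\arctan(e^t)$. If $\Phi\in C^\infty(\mathbb{R}^2;\mathbb{C}^2)$ is parallel with respect to $(\mathbb H(x),i)$ and either $e^{-x/2}\Phi(x,y)\in L^\infty(\mathbb{R}^2)$ or $e^{x/2}\Phi(x,y)\in L^\infty(\mathbb{R}^2)$, then $\Phi$ is a constant complex multiple of a column of $\Phi^{\mathbb H}(x,y,i)$ (the two columns of $\Phi^{\mathbb H}(\cdot,\cdot,i)$ being linearly dependent).
   Context: Pauli matrices $\sigma_1=\begin{pmatrix}0&1\\1&0\end{pmatrix}$, $\sigma_2=\begin{pmatrix}0&-i\\ i&0\end{pmatrix}$, $\sigma_3=\begin{pmatrix}1&0\\0&-1\end{pmatrix}$; $K(\lambda)=\lambda-\lambda^{-1}$, $J(\lambda)=\lambda+\lambda^{-1}$. For $u\in C^\infty(\mathbb{R}^2)$, $\lambda\ne0$: $A=\frac i4\big((\lambda-\lambda^{-1}\cos u)\sigma_3-(\partial_xu-i\partial_yu)\sigma_2-\lambda^{-1}(\sin u)\sigma_1\big)$, $B=\frac14\big(-(\lambda+\lambda^{-1}\cos u)\sigma_3+(\partial_xu-i\partial_yu)\sigma_2-\lambda^{-1}(\sin u)\sigma_1\big)$; $\Phi$ is parallel with respect to $(u,\lambda)$ if $\partial_x\Phi=A\Phi$, $\partial_y\Phi=B\Phi$. $\Phi^0(x,y,\lambda)=\mathrm{diag}(e^{\frac i4K(\lambda)x-\frac14J(\lambda)y},e^{-\frac i4K(\lambda)x+\frac14J(\lambda)y})$ and, for $\lambda\ne0,-i$,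 $\Phi^{\mathbb H}=\Phi^0+\frac{i}{\lambda+i}\big((\tanh x)\sigma_3-(\operatorname{sech}x)\sigma_1-\mathrm{Id}\big)\Phi^0$. *)

theory Defs
  imports "HOL-Analysis.Analysis"
begin

definition mat2 :: "complex \<Rightarrow> complex \<Rightarrow> complex \<Rightarrow> complex \<Rightarrow> complex^2^2" where
  "mat2 a b c d = (\<chi> i j. if i = 1 then (if j = 1 then a else b) else (if j = 1 then c else d))"

definition sigma1 :: "complex^2^2" where "sigma1 = mat2 0 1 1 0"
definition sigma2 :: "complex^2^2" where "sigma2 = mat2 0 (-\<i>) \<i> 0"
definition sigma3 :: "complex^2^2" where "sigma3 = mat2 1 0 0 (-1)"
definition Id2 :: "complex^2^2" where "Id2 = mat2 1 0 0 1"

definition Kf :: "complex \<Rightarrow> complex" where "Kf l = l - inverse l"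
definition Jf :: "complex \<Rightarrow> complex" where "Jf l = l + inverse l"

definition dx :: "(real \<times> real \<Rightarrow> real) \<Rightarrow> real \<Rightarrow> real \<Rightarrow> real" where
  "dx u x y = deriv (\<lambda>t. u (t, y)) x"
definition dy :: "(real \<times> real \<Rightarrow> real) \<Rightarrow> real \<Rightarrow> real \<Rightarrow> real" where
  "dy u x y = deriv (\<lambda>t. u (x, t)) y"

definition Amat :: "(real \<times> real \<Rightarrow> real) \<Rightarrow> complex \<Rightarrow> real \<Rightarrow> real \<Rightarrow> complex^2^2" where
  "Amat u l x y =
     (\<chi> a b. (\<i> / 4) * (((l - inverse l * cos (u (x, y))) * sigma3 $ a $ b)
        - (complex_of_real (dx u x y) - \<i> * complex_of_real (dy u x y)) * sigma2 $ a $ b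
        - inverse l * sin (u (x, y)) * sigma1 $ a $ b))"

definition Bmat :: "(real \<times> real \<Rightarrow> real) \<Rightarrow> complex \<Rightarrow> real \<Rightarrow> real \<Rightarrow> complex^2^2" where
  "Bmat u l x y =
     (\<chi> a b. (1 / 4) * (- (l + inverse l * cos (u (x, y))) * sigma3 $ a $ b
        + (complex_of_real (dx u x y) - \<i> * complex_of_real (dy u x y)) * sigma2 $ a $ b
        - inverse l * sin (u (x, y)) * sigma1 $ a $ b))"

definition parallel :: "(real \<times> real \<Rightarrow> complex^2) \<Rightarrow> (real \<times> real \<Rightarrow> real) \<Rightarrow> complex \<Rightarrow> bool" where
  "parallel Phi u l \<longleftrightarrow>
     (\<forall>x y. ((\<lambda>t. Phi (t, y)) has_vector_derivative (Amat u l x y *v Phi (x, y))) (at x)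
          \<and> ((\<lambda>t. Phi (x, t)) has_vector_derivative (Bmat u l x y *v Phi (x, y))) (at y))"

fun Ck :: "nat \<Rightarrow> (real \<times> real \<Rightarrow> 'a::real_normed_vector) \<Rightarrow> bool" where
  "Ck 0 f = continuous_on UNIV f"
| "Ck (Suc k) f = ((\<forall>p. f differentiable (at p))
      \<and> Ck k (\<lambda>p. frechet_derivative f (at p) (1, 0))
      \<and> Ck k (\<lambda>p. frechet_derivative f (at p) (0, 1)))"

definition smooth :: "(real \<times> real \<Rightarrow> 'a::real_normed_vector) \<Rightarrow> bool" where
  "smooth f \<longleftrightarrow> (\<forall>k. Ck k f)"

definition Phi0 :: "real \<Rightarrow> real \<Rightarrow> complex \<Rightarrow> complex^2^2" where
  "Phi0 x y l = mat2 (exp (\<i> / 4 * Kf l * x - 1 / 4 * Jf l * y)) 0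
                     0 (exp (- \<i> / 4 * Kf l * x + 1 / 4 * Jf l * y))"

definition PhiH :: "real \<Rightarrow> real \<Rightarrow> complex \<Rightarrow> complex^2^2" where
  "PhiH x y l = Phi0 x y l +
     (\<chi> a b. (\<i> / (l + \<i>)) *
        (((\<chi> c d. complex_of_real (tanh x) * sigma3 $ c $ d
                    - complex_of_real (1 / cosh x) * sigma1 $ c $ d - Id2 $ c $ d))
         ** Phi0 x y l) $ a $ b)"

definition Hsol :: "real \<Rightarrow> real" where "Hsol t = 4 * arctan (exp t)"

end

theory Submission
  imports Defs
begin

lemma cos_sin_2arctan: "cos (2 * arctan q) = (1 - q^2)/(1+q^2)" "sin (2*arctan q) = 2*q/(1+q^2)"
proof -
  have p: "0 < 1 + q^2" by (simp add: add_pos_nonneg)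
  have s: "sqrt (1+q^2)^2 = 1 + q^2" using p by simp
  show "cos (2 * arctan q) = (1 - q^2)/(1+q^2)"
    by (simp add: cos_double cos_arctan sin_arctan power_divide s diff_divide_distrib)
  show "sin (2*arctan q) = 2*q/(1+q^2)"
    by (simp add: sin_double cos_arctan sin_arctan power_divide s)
qed

lemma cosH: "cos (Hsol x) = ((1 - exp x^2)^2 - 4*exp x^2)/(1+exp x^2)^2"
proof -
  have p: "0 < 1 + exp x^2" by (simp add: add_pos_nonneg)
  have "Hsol x = 2 * (2 * arctan (exp x))" by (simp add: Hsol_def)
  then have "cos (Hsol x) = cos (2 * arctan (exp x))^2 - sin (2 * arctan (exp x))^2"
    using cos_double[of "2 * arctan (exp x)"] by simp
  then show ?thesis
    by (simp only: cos_sin_2arctan power_divide) (simp add: diff_divide_distrib power_mult_distrib)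
qed

lemma sinH: "sin (Hsol x) = 4 * exp x * (1 - exp x^2)/(1+exp x^2)^2"
proof -
  have p: "0 < 1 + exp x^2" by (simp add: add_pos_nonneg)
  have "Hsol x = 2 * (2 * arctan (exp x))" by (simp add: Hsol_def)
  then have "sin (Hsol x) = 2 * sin (2 * arctan (exp x)) * cos (2 * arctan (exp x))"
    using sin_double[of "2 * arctan (exp x)"] by simp
  then show ?thesis using p
    by (simp add: cos_sin_2arctan power2_eq_square)
qed

lemma dxH: "dx (\<lambda>(x, y). Hsol x) x y = 4 * exp x / (1 + exp x^2)"
proof -
  have "((\<lambda>t. arctan (exp t)) has_real_derivative inverse (1 + exp x^2) * exp x) (at x)"
    by (rule DERIV_chain2[OF DERIV_arctan DERIV_exp])
  then have "((\<lambda>t. Hsol t) has_real_derivative 4 * (inverse (1 + exp x^2) * exp x)) (at x)"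
    unfolding Hsol_def by (rule DERIV_cmult)
  then show ?thesis unfolding dx_def by (simp add: DERIV_imp_deriv field_simps)
qed

lemma dyH: "dy (\<lambda>(x, y). Hsol x) x y = 0"
  unfolding dy_def by simp


abbreviation "uH \<equiv> (\<lambda>(x::real, y::real). Hsol x)"

lemma pos1: "0 < 1 + exp (x::real) ^ 2" using zero_le_power2[of "exp x"] by linarith

lemmas ent_simps = mat2_def sigma1_def sigma2_def sigma3_def dyH

lemma B11: "Bmat uH \<i> x y $ 1 $ 1 = - \<i> * of_real (2 * exp x^2 / (1 + exp x^2)^2)"
proof -
  have r: "(1 - cos (Hsol x))/4 = 2 * exp x^2 / (1 + exp x^2)^2"
    using pos1[of x] by (simp add: cosH field_simps) algebra
  have "Bmat uH \<i> x y $ 1 $ 1 = - \<i> * of_real ((1 - cos (Hsol x))/4)"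
    unfolding Bmat_def by (simp add: ent_simps field_simps)
  then show ?thesis using r by simp
qed

lemma B12: "Bmat uH \<i> x y $ 1 $ 2 = - \<i> * of_real (2 * exp x^3 / (1 + exp x^2)^2)"
proof -
  have r: "(sin (Hsol x) - dx uH x y)/4 = - (2 * exp x^3 / (1 + exp x^2)^2)"
    using pos1[of x] by (simp add: cosH sinH dxH divide_simps) algebra
  have "Bmat uH \<i> x y $ 1 $ 2 = \<i> * of_real ((sin (Hsol x) - dx uH x y)/4)"
    unfolding Bmat_def by (simp add: ent_simps field_simps)
  then show ?thesis using r by simp
qed

lemma B21: "Bmat uH \<i> x y $ 2 $ 1 = \<i> * of_real (2 * exp x / (1 + exp x^2)^2)"
proof -
  have r: "(dx uH x y + sin (Hsol x))/4 = 2 * exp x / (1 + exp x^2)^2"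
    using pos1[of x] by (simp add: cosH sinH dxH divide_simps) algebra
  have "Bmat uH \<i> x y $ 2 $ 1 = \<i> * of_real ((dx uH x y + sin (Hsol x))/4)"
    unfolding Bmat_def by (simp add: ent_simps field_simps)
  then show ?thesis using r by simp
qed

lemma B22: "Bmat uH \<i> x y $ 2 $ 2 = \<i> * of_real (2 * exp x^2 / (1 + exp x^2)^2)"
proof -
  have r: "(1 - cos (Hsol x))/4 = 2 * exp x^2 / (1 + exp x^2)^2"
    using pos1[of x] by (simp add: cosH sinH dxH divide_simps) algebra
  have "Bmat uH \<i> x y $ 2 $ 2 = \<i> * of_real ((1 - cos (Hsol x))/4)"
    unfolding Bmat_def by (simp add: ent_simps field_simps)
  then show ?thesis using r by simp
qed

lemma A21: "Amat uH \<i> x y $ 2 $ 1 = of_real (2 * exp x^3 / (1 + exp x^2)^2)"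
proof -
  have r: "(dx uH x y - sin (Hsol x))/4 = 2 * exp x^3 / (1 + exp x^2)^2"
    using pos1[of x] by (simp add: cosH sinH dxH divide_simps) algebra
  have "Amat uH \<i> x y $ 2 $ 1 = of_real ((dx uH x y - sin (Hsol x))/4)"
    unfolding Amat_def by (simp add: ent_simps field_simps)
  then show ?thesis using r by simp
qed

lemma A22: "Amat uH \<i> x y $ 2 $ 2 = of_real ((1 - exp x^2)^2 / (2 * (1 + exp x^2)^2))"
proof -
  have r: "(1 + cos (Hsol x))/4 = (1 - exp x^2)^2 / (2 * (1 + exp x^2)^2)"
    using pos1[of x] by (simp add: cosH sinH dxH divide_simps) algebra
  have "Amat uH \<i> x y $ 2 $ 2 = of_real ((1 + cos (Hsol x))/4)"
    unfolding Amat_def by (simp add: ent_simps field_simps)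
  then show ?thesis using r by simp
qed

lemma KJ: "Kf \<i> = 2 * \<i>" "Jf \<i> = 0" by (simp_all add: Kf_def Jf_def)

lemma Phi0_i: "Phi0 x y \<i> = mat2 (of_real (exp (-x/2))) 0 0 (of_real (exp (x/2)))"
proof -
  have a: "\<i> / 4 * (2 * \<i>) * of_real x = (of_real (-x/2) :: complex)"
    by (simp add: field_simps)
  have b: "- \<i> / 4 * (2 * \<i>) * of_real x = (of_real (x/2) :: complex)"
    by (simp add: field_simps)
  show ?thesis unfolding Phi0_def KJ by (simp flip: exp_of_real)
qed

lemma PhiH11: "PhiH x y \<i> $ 1 $ 1 = of_real ((1 + tanh x)/2 * exp (-x/2))"
  unfolding PhiH_def Phi0_i by (simp add: mat2_def sigma1_def sigma3_def Id2_def matrix_matrix_mult_def sum_2 field_simps)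

lemma PhiH12: "PhiH x y \<i> $ 1 $ 2 = of_real (- ((1 / cosh x)/2 * exp (x/2)))"
  unfolding PhiH_def Phi0_i by (simp add: mat2_def sigma1_def sigma3_def Id2_def matrix_matrix_mult_def sum_2 field_simps)
lemma PhiH21: "PhiH x y \<i> $ 2 $ 1 = of_real (- ((1 / cosh x)/2 * exp (-x/2)))"
  unfolding PhiH_def Phi0_i by (simp add: mat2_def sigma1_def sigma3_def Id2_def matrix_matrix_mult_def sum_2 field_simps)
lemma PhiH22: "PhiH x y \<i> $ 2 $ 2 = of_real ((1 - tanh x)/2 * exp (x/2))"
  unfolding PhiH_def Phi0_i by (simp add: mat2_def sigma1_def sigma3_def Id2_def matrix_matrix_mult_def sum_2 field_simps)

definition E :: "real \<Rightarrow> real" where "E x = exp (x/2) / (1 + exp x ^ 2)"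

lemma hfacts: "exp (x::real) = exp (x/2)^2" "exp (-x/2) = 1 / exp (x/2)" "exp (-x) = 1 / exp (x/2)^2"
   "exp (-2*x) = 1 / exp (x/2)^4"
proof -
  have a: "exp x = exp (x/2)^2" by (simp add: power2_eq_square flip: exp_add)
  show "exp x = exp (x/2)^2" by (fact a)
  show "exp (-x/2) = 1 / exp (x/2)" by (simp add: exp_minus inverse_eq_divide)
  show "exp (-x) = 1 / exp (x/2)^2" by (simp add: exp_minus a inverse_eq_divide)
  have "exp (-2*x) = 1 / exp x ^ 2" by (simp add: exp_minus inverse_eq_divide flip: exp_of_nat_mult)
  then show "exp (-2*x) = 1 / exp (x/2)^4" by (simp add: a inverse_eq_divide flip: power_mult)
qed

lemma Eids: "(1 + tanh x)/2 * exp (-x/2) = exp x * E x"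
  "(1 / cosh x)/2 * exp (x/2) = exp x * E x"
  "(1 / cosh x)/2 * exp (-x/2) = E x"
  "(1 - tanh x)/2 * exp (x/2) = E x"
proof -
  define h where "h = exp (x/2)"
  have h: "h > 0" by (simp add: h_def)
  have c: "cosh x = (h^2 + 1/h^2)/2" unfolding cosh_def h_def using hfacts[of x] by simp
  have t: "tanh x = (1 - 1/h^4)/(1 + 1/h^4)" unfolding tanh_real_altdef h_def using hfacts[of x] by simp
  have e: "E x = h / (1 + h^4)" unfolding E_def h_def by (simp add: hfacts(1)[of x] flip: power_mult)
  have h4p: "0 < h^4" using h by simp
  then have h4: "1 + h^4 \<noteq> 0" "h^4 + 1 \<noteq> 0" "h^4 \<noteq> 0" by linarith+
  have ex: "exp x = h^2" "exp (-x/2) = 1/h" unfolding h_def using hfacts[of x] by simp_all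
  show "(1 + tanh x)/2 * exp (-x/2) = exp x * E x"
    unfolding t e ex using h h4p by (simp add: divide_simps h4, (intro conjI impI)?; (linarith | algebra))
  show "(1 / cosh x)/2 * exp (x/2) = exp x * E x"
    unfolding c e ex h_def[symmetric] using h h4p by (simp add: divide_simps h4, (intro conjI impI)?; (linarith | algebra))
  show "(1 / cosh x)/2 * exp (-x/2) = E x"
    unfolding c e ex using h h4p by (simp add: divide_simps h4, (intro conjI impI)?; (linarith | algebra))
  show "(1 - tanh x)/2 * exp (x/2) = E x"
    unfolding t e ex h_def[symmetric] using h h4p by (simp add: divide_simps h4, (intro conjI impI)?; (linarith | algebra))
qed

lemma col2: "column 2 (PhiH x y \<i>) $ 1 = - of_real (exp x * E x)"
  "column 2 (PhiH x y \<i>) $ 2 = of_real (E x)"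
  "column 1 (PhiH x y \<i>) $ 1 = of_real (exp x * E x)"
  "column 1 (PhiH x y \<i>) $ 2 = - of_real (E x)"
  unfolding column_def vec_lambda_beta PhiH11 PhiH12 PhiH21 PhiH22 Eids by simp_all

lemma cols_dep: "column 1 (PhiH x y \<i>) + column 2 (PhiH x y \<i>) = 0"
  by (simp add: vec_eq_iff forall_2 col2)

lemma Bv: "(Bmat uH \<i> x y *v v) $ 1 = - \<i> * of_real (2 * exp x / (1 + exp x^2)^2) * of_real (exp x) * (v $ 1 + of_real (exp x) * v $ 2)"
  "(Bmat uH \<i> x y *v v) $ 2 = \<i> * of_real (2 * exp x / (1 + exp x^2)^2) * (v $ 1 + of_real (exp x) * v $ 2)"
proof -
  let ?b = "complex_of_real (2 * exp x / (1 + exp x^2)^2)" and ?Q = "complex_of_real (exp x)"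
  have e1: "complex_of_real (2 * exp x^2 / (1 + exp x^2)^2) = ?b * ?Q"
    by (simp add: power2_eq_square)
  have e2: "complex_of_real (2 * exp x^3 / (1 + exp x^2)^2) = ?b * ?Q * ?Q"
    by (simp add: power3_eq_cube)
  show "(Bmat uH \<i> x y *v v) $ 1 = - \<i> * ?b * ?Q * (v $ 1 + ?Q * v $ 2)"
    unfolding matrix_vector_mult_def sum_2 vec_lambda_beta B11 B12 e1 e2 by algebra
  show "(Bmat uH \<i> x y *v v) $ 2 = \<i> * ?b * (v $ 1 + ?Q * v $ 2)"
    unfolding matrix_vector_mult_def sum_2 vec_lambda_beta B21 B22 e1 by algebra
qed

lemma Av: "(Amat uH \<i> x y *v v) $ 2 = of_real (2 * exp x^3 / (1 + exp x^2)^2) * v $ 1 + of_real ((1 - exp x^2)^2 / (2 * (1 + exp x^2)^2)) * v $ 2"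
  by (simp add: matrix_vector_mult_def sum_2 A21 A22)

lemma ae_bound:
  fixes f :: "real \<times> real \<Rightarrow> real"
  assumes c: "continuous_on UNIV f" and ae: "AE p in lborel. f p \<le> C"
  shows "f p \<le> C"
proof (rule ccontr)
  assume "\<not> f p \<le> C"
  then have "p \<in> {q. C < f q}" by simp
  moreover have "open {q. C < f q}"
    using c by (intro open_Collect_less) (auto intro: continuous_intros)
  ultimately obtain r where r: "r > 0" "ball p r \<subseteq> {q. C < f q}"
    by (meson openE)
  from ae obtain N where N: "{q \<in> space lborel. \<not> f q \<le> C} \<subseteq> N" "emeasure lborel N = 0" "N \<in> sets lborel"
    by (rule AE_E)
  have "ball p r \<subseteq> N" using r(2) N(1) by force
  then have "emeasure lborel (ball p r) \<le> emeasure lborel N"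
    using N by (intro emeasure_mono) auto
  then have "emeasure lborel (ball p r) = 0" using N by auto
  then have "measure lborel (ball p r) = 0" by (simp add: measure_def)
  with content_ball_pos[OF r(1), of p] show False by simp
qed

lemma step_y:
  fixes Phi :: "real \<times> real \<Rightarrow> complex^2"
  assumes Hy: "\<And>x y. ((\<lambda>t. Phi (x, t)) has_vector_derivative (Bmat uH \<i> x y *v Phi (x, y))) (at y)"
    and M: "\<And>t. norm (Phi (x, t)) \<le> M"
  shows "Phi (x, y) $ 1 = - of_real (exp x) * Phi (x, y) $ 2 \<and> Phi (x, y) $ 2 = Phi (x, 0) $ 2"
proof -
  define Q where "Q = complex_of_real (exp x)"
  define b where "b = complex_of_real (2 * exp x / (1 + exp x^2)^2)"
  have "2 * exp x / (1 + exp x^2)^2 \<noteq> 0" using pos1[of x] by simp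
  then have bnz: "b \<noteq> 0" unfolding b_def by (simp only: of_real_eq_0_iff) simp
  define r where "r t = Phi (x, t) $ 1 + Q * Phi (x, t) $ 2" for t
  have d1: "((\<lambda>t. Phi (x, t) $ k) has_vector_derivative (Bmat uH \<i> x t *v Phi (x, t)) $ k) (at t)" for k t
    using bounded_linear.has_vector_derivative[OF bounded_linear_vec_nth Hy[of x t]] .
  have Bv1: "(Bmat uH \<i> x t *v Phi (x, t)) $ 1 = - \<i> * b * Q * r t"
    and Bv2: "(Bmat uH \<i> x t *v Phi (x, t)) $ 2 = \<i> * b * r t" for t
    unfolding Bv b_def Q_def r_def by simp_all
  have dr: "(r has_vector_derivative 0) (at t)" for t
  proof -
    have "(r has_vector_derivative ((Bmat uH \<i> x t *v Phi (x, t)) $ 1 + Q * (Bmat uH \<i> x t *v Phi (x, t)) $ 2)) (at t)"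
      unfolding r_def[abs_def]
      by (intro has_vector_derivative_add d1 bounded_linear.has_vector_derivative[OF bounded_linear_mult_right])
    moreover have "(Bmat uH \<i> x t *v Phi (x, t)) $ 1 + Q * (Bmat uH \<i> x t *v Phi (x, t)) $ 2 = 0"
      unfolding Bv1 Bv2 by algebra
    ultimately show ?thesis by simp
  qed
  obtain r0 where r0: "\<And>t. r t = r0"
    using has_vector_derivative_zero_constant[of UNIV r] dr by auto
  define w where "w = \<i> * b * r0"
  define g where "g t = Phi (x, t) $ 2 - t *\<^sub>R w" for t
  have dg: "(g has_vector_derivative 0) (at t)" for t
  proof -
    have "(g has_vector_derivative ((Bmat uH \<i> x t *v Phi (x, t)) $ 2 - (t *\<^sub>R 0 + 1 *\<^sub>R w))) (at t)"
      unfolding g_def[abs_def]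
      by (intro has_vector_derivative_diff d1 has_vector_derivative_scaleR DERIV_ident has_vector_derivative_const)
    then show ?thesis unfolding Bv2 r0 w_def by simp
  qed
  obtain g0 where g0: "\<And>t. g t = g0"
    using has_vector_derivative_zero_constant[of UNIV g] dg by auto
  have gt: "Phi (x, t) $ 2 = Phi (x, 0) $ 2 + t *\<^sub>R w" for t
    using g0[of t] g0[of 0] unfolding g_def by (simp add: algebra_simps)
  have w0: "w = 0"
  proof (rule ccontr)
    assume wn: "w \<noteq> 0"
    have Mn: "M \<ge> 0" using M[of 0] norm_ge_zero[of "Phi (x,0)"] by linarith
    define t where "t = (M + norm (Phi (x, 0) $ 2) + 1) / norm w"
    have tpos: "t \<ge> 0" unfolding t_def using Mn by simp
    have "norm (t *\<^sub>R w) = M + norm (Phi (x, 0) $ 2) + 1"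
      unfolding t_def using wn Mn by simp
    moreover have "norm (t *\<^sub>R w) \<le> norm (Phi (x, t) $ 2) + norm (Phi (x, 0) $ 2)"
      using gt[of t] norm_triangle_ineq4[of "Phi (x, t) $ 2" "Phi (x, 0) $ 2"] by simp
    moreover have "norm (Phi (x, t) $ 2) \<le> M"
      using Finite_Cartesian_Product.norm_nth_le[of "Phi (x, t)" 2] M[of t] by linarith
    ultimately show False by linarith
  qed
  then have "r0 = 0" using bnz unfolding w_def by simp
  then have "r y = 0" using r0 by simp
  then show ?thesis using gt[of y] w0 unfolding r_def Q_def by (simp add: eq_neg_iff_add_eq_0)
qed

definition F :: "real \<Rightarrow> real" where "F s = (1 + exp s^2) * exp (-s/2)"

lemma F_deriv: "(F has_real_derivative exp (-s/2) * (3 * exp s^2 - 1)/2) (at s)"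
proof -
  have d: "(F has_real_derivative (2 * exp s * exp s) * exp (-s/2) + (1 + exp s^2) * (exp (-s/2) * (-1/2))) (at s)"
    unfolding F_def[abs_def]
    by (auto intro!: derivative_eq_intros)
  have eq: "(2 * exp s * exp s) * exp (-s/2) + (1 + exp s^2) * (exp (-s/2) * (-1/2)) = exp (-s/2) * (3 * exp s^2 - 1)/2"
    by (simp add: field_simps power2_eq_square)
  show ?thesis using d unfolding eq .
qed

lemma EF: "of_real (E s) * of_real (F s) = (1::complex)"
proof -
  have "E s * F s = exp (s/2) * exp (-s/2)" unfolding E_def F_def using pos1[of s] by simp
  also have "\<dots> = 1" by (simp flip: exp_add)
  finally show ?thesis by (simp flip: of_real_mult)
qed

lemma gen_lin: "a *\<^sub>R (complex_of_real k * z) + b *\<^sub>R z = complex_of_real (a * k + b) * z"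
  by (simp add: scaleR_conv_of_real algebra_simps)

lemma step_x:
  fixes Phi :: "real \<times> real \<Rightarrow> complex^2"
  assumes Hx: "\<And>x y. ((\<lambda>t. Phi (t, y)) has_vector_derivative (Amat uH \<i> x y *v Phi (x, y))) (at x)"
    and K: "\<And>x. Phi (x, 0) $ 1 = - of_real (exp x) * Phi (x, 0) $ 2"
  shows "Phi (x, 0) $ 2 = of_real (E x) * (2 * Phi (0, 0) $ 2)"
proof -
  define f where "f s = Phi (s, 0) $ 2" for s
  define kk :: "real \<Rightarrow> real" where "kk s = (1 - 3 * exp s^2) / (2 * (1 + exp s^2))" for s
  have df: "(f has_vector_derivative of_real (kk s) * f s) (at s)" for s
  proof -
    have d: "(f has_vector_derivative (Amat uH \<i> s 0 *v Phi (s, 0)) $ 2) (at s)"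
      unfolding f_def[abs_def] using bounded_linear.has_vector_derivative[OF bounded_linear_vec_nth Hx[where x=s and y=0]] .
    have r: "(1 - exp s^2)^2 / (2 * (1 + exp s^2)^2) - 2 * exp s^3 / (1 + exp s^2)^2 * exp s = kk s"
      unfolding kk_def using pos1[of s] by (simp add: divide_simps) algebra
    have "(Amat uH \<i> s 0 *v Phi (s, 0)) $ 2 = of_real ((1 - exp s^2)^2 / (2 * (1 + exp s^2)^2) - 2 * exp s^3 / (1 + exp s^2)^2 * exp s) * f s"
      unfolding Av K f_def by (simp add: algebra_simps)
    then have eqA: "(Amat uH \<i> s 0 *v Phi (s, 0)) $ 2 = of_real (kk s) * f s" unfolding r .
    show ?thesis using d unfolding eqA .
  qed
  define c where "c s = F s *\<^sub>R f s" for s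
  have dc: "(c has_vector_derivative 0) (at s)" for s
  proof -
    have "(c has_vector_derivative (F s *\<^sub>R (of_real (kk s) * f s) + (exp (-s/2) * (3 * exp s^2 - 1)/2) *\<^sub>R f s)) (at s)"
      unfolding c_def[abs_def] by (intro has_vector_derivative_scaleR F_deriv df)
    moreover have "F s * kk s + exp (-s/2) * (3 * exp s^2 - 1)/2 = 0"
      unfolding F_def kk_def using pos1[of s] by (simp add: divide_simps) algebra
    then have "F s *\<^sub>R (of_real (kk s) * f s) + (exp (-s/2) * (3 * exp s^2 - 1)/2) *\<^sub>R f s = 0"
      unfolding gen_lin by simp
    ultimately show ?thesis by simp
  qed
  obtain c0 where c0: "\<And>s. c s = c0"
    using has_vector_derivative_zero_constant[of UNIV c] dc by auto
  have F0: "F 0 = 2" by (simp add: F_def)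
  have "c x = c 0" using c0 by simp
  then have "of_real (F x) * f x = 2 * f 0" unfolding c_def F0 by (simp add: scaleR_conv_of_real)
  then have "of_real (E x) * (of_real (F x) * f x) = of_real (E x) * (2 * f 0)" by simp
  then show ?thesis unfolding f_def using EF[of x] by (simp add: mult.assoc[symmetric])
qed

theorem corollary3p9:
  fixes Phi :: "real \<times> real \<Rightarrow> complex^2"
  assumes "smooth Phi"
    and "parallel Phi (\<lambda>(x, y). Hsol x) \<i>"
    and "(\<exists>C. AE p in lborel. norm (exp (- fst p / 2) *\<^sub>R Phi p) \<le> C)
         \<or> (\<exists>C. AE p in lborel. norm (exp (fst p / 2) *\<^sub>R Phi p) \<le> C)"
  shows "(\<exists>c::complex. \<exists>j::2. \<forall>x y. Phi (x, y) = c *s column j (PhiH x y \<i>))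
         \<and> (\<exists>a b::complex. (a, b) \<noteq> (0, 0) \<and>
              (\<forall>x y. a *s column 1 (PhiH x y \<i>) + b *s column 2 (PhiH x y \<i>) = 0))"
proof -
  have Hx: "\<And>x y. ((\<lambda>t. Phi (t, y)) has_vector_derivative (Amat uH \<i> x y *v Phi (x, y))) (at x)"
   and Hy: "\<And>x y. ((\<lambda>t. Phi (x, t)) has_vector_derivative (Bmat uH \<i> x y *v Phi (x, y))) (at y)"
    using assms(2) unfolding parallel_def by auto
  have cont: "continuous_on UNIV Phi"
    using assms(1) unfolding smooth_def by (metis Ck.simps(1))
  have key: "\<exists>M. \<forall>y. norm (Phi (x, y)) \<le> M"
    if ae: "AE p in lborel. norm (exp (s * fst p) *\<^sub>R Phi p) \<le> C" for s C x
  proof -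
    have bp: "norm (exp (s * fst p) *\<^sub>R Phi p) \<le> C" for p
      by (rule ae_bound[OF _ ae]) (intro continuous_intros cont)
    then have "exp (s * x) * norm (Phi (x, y)) \<le> C" for y
      using bp[of "(x,y)"] by simp
    then have "norm (Phi (x, y)) \<le> C / exp (s * x)" for y
      by (simp add: pos_le_divide_eq mult.commute)
    then show ?thesis by blast
  qed
  have bnd: "\<exists>M. \<forall>y. norm (Phi (x, y)) \<le> M" for x
  proof -
    from assms(3) show ?thesis
    proof
      assume "\<exists>C. AE p in lborel. norm (exp (- fst p / 2) *\<^sub>R Phi p) \<le> C"
      then obtain C where "AE p in lborel. norm (exp ((-1/2) * fst p) *\<^sub>R Phi p) \<le> C" by auto
      then show ?thesis by (rule key)
    next
      assume "\<exists>C. AE p in lborel. norm (exp (fst p / 2) *\<^sub>R Phi p) \<le> C"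
      then obtain C where "AE p in lborel. norm (exp ((1/2) * fst p) *\<^sub>R Phi p) \<le> C" by auto
      then show ?thesis by (rule key)
    qed
  qed
  have K: "Phi (x, y) $ 1 = - of_real (exp x) * Phi (x, y) $ 2 \<and> Phi (x, y) $ 2 = Phi (x, 0) $ 2" for x y
  proof -
    obtain M where "\<forall>y. norm (Phi (x, y)) \<le> M" using bnd by blast
    then show ?thesis by (intro step_y[OF Hy]) auto
  qed
  define c0 where "c0 = 2 * Phi (0, 0) $ 2"
  have X: "Phi (x, 0) $ 2 = of_real (E x) * c0" for x
    unfolding c0_def by (rule step_x[OF Hx]) (use K in blast)
  have "\<forall>x y. Phi (x, y) = c0 *s column 2 (PhiH x y \<i>)"
  proof (intro allI)
    fix x y
    show "Phi (x, y) = c0 *s column 2 (PhiH x y \<i>)"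
      unfolding vec_eq_iff forall_2 using K[of x y] X[of x] by (simp add: col2 algebra_simps)
  qed
  moreover have "(1::complex, 1::complex) \<noteq> (0, 0) \<and>
      (\<forall>x y. (1::complex) *s column 1 (PhiH x y \<i>) + 1 *s column 2 (PhiH x y \<i>) = 0)"
    using cols_dep by simp
  ultimately show ?thesis by blast
qed

end
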